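(* Let $n\ge3$. Let $(\mu,\Sigma)$ satisfy the normalization below, with $\operatorname{Tr}(\Sigma)=n$, and the observability assumption with parameter $\gamma\in(0,1)$. Then for every $i\in[n]$, $$\Sigma_{ii}\le\frac{100\log(8/\gamma)}{\gamma^2}.$$
   Context: Probit model: utilities $X\sim\mathcal{N}(\mu,\Sigma)$ with $\mu\in\mathbb{R}^n$ and $\Sigma$ symmetric positive semidefinite. Normalization: $\langle\mu,\mathbf 1\rangle=0$, $\Sigma\mathbf1=0$, $\operatorname{Tr}(\Sigma)=n$, and $\operatorname{rank}(\Sigma)=n-1$. Observability assumption: for all pairwise distinct $i,j,k\in[n]$, $\Pr\{X_i>X_j>X_k\}\ge\gamma$. $\log$ is the natural logarithm. *)

theory Defs
  imports "HOL-Analysis.Analysis" "HOL-Probability.Probability"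
begin

definition std_gaussian :: "(real^'n::finite) measure" where
  "std_gaussian = density lborel (\<lambda>z. ennreal (\<Prod>i\<in>UNIV. std_normal_density (z $ i)))"

text \<open>Law of X = mu + A Z with Z standard Gaussian; this is N(mu, A A^T).
  Every N(mu, Sigma) with Sigma PSD arises this way (A any matrix with A A^T = Sigma),
  and the law depends only on A A^T.\<close>
definition gaussian_vec :: "real^'n \<Rightarrow> real^'n^'n \<Rightarrow> (real^'n::finite) measure" where
  "gaussian_vec mu A = distr std_gaussian borel (\<lambda>z. mu + A *v z)"

end

theory Submission imports Defs begin

lemma basis_sum_nth:
  fixes f :: "real^'n \<Rightarrow> real"
  shows "(\<Sum>b\<in>Basis. f b *\<^sub>R b) $ i = f (axis i 1)"
proof -
  have "(\<Sum>b\<in>Basis. f b *\<^sub>R b) $ i = (\<Sum>b\<in>Basis. f b *\<^sub>R b) \<bullet> axis i 1"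
    by (simp add: cart_eq_inner_axis)
  also have "\<dots> = (\<Sum>b\<in>Basis. f b * (b \<bullet> axis i 1))"
    by (simp add: inner_sum_left)
  also have "\<dots> = f (axis i 1)"
  proof -
    have "axis i 1 \<in> (Basis :: (real^'n) set)" by (auto simp: Basis_vec_def)
    then have "(\<Sum>b\<in>Basis. f b * (b \<bullet> axis i 1)) = (\<Sum>b\<in>Basis. if b = axis i 1 then f b else 0)"
      by (intro sum.cong refl) (auto simp: inner_Basis)
    also have "\<dots> = f (axis i 1)" using \<open>axis i 1 \<in> Basis\<close> by (simp add: sum.delta')
    finally show ?thesis .
  qed
  finally show ?thesis .
qed

lemma prod_basis:
  fixes f :: "real^'n \<Rightarrow> real"
  shows "(\<Prod>i\<in>UNIV. g (f (axis i 1))) = (\<Prod>b\<in>(Basis::(real^'n) set). g (f b))"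
proof -
  have B: "(Basis::(real^'n) set) = (\<lambda>i. axis i 1) ` UNIV"
    by (auto simp: Basis_vec_def)
  have "inj (\<lambda>i::'n. axis i (1::real))"
    by (auto simp: inj_def axis_eq_axis)
  then show ?thesis unfolding B by (simp add: prod.reindex)
qed

abbreviation "stdN \<equiv> density lborel std_normal_density"

lemma PiM_stdN:
  "density (PiM (Basis::(real^'n) set) (\<lambda>_. lborel)) (\<lambda>f. \<Prod>b\<in>Basis. ennreal (std_normal_density (f b)))
    = PiM (Basis::(real^'n) set) (\<lambda>_. stdN)"
proof -
  interpret N: prob_space stdN by (rule prob_space_normal_density) simp
  interpret product_sigma_finite "\<lambda>_::real^'n. stdN" by standard
  interpret L: product_sigma_finite "\<lambda>_::real^'n. lborel" by standard
  show ?thesis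
  proof (rule PiM_eqI)
    show "sets (density (Pi\<^sub>M Basis (\<lambda>_. lborel)) (\<lambda>f. \<Prod>b\<in>(Basis::(real^'n) set). ennreal (std_normal_density (f b)))) =
      sets (Pi\<^sub>M Basis (\<lambda>_. stdN))"
      unfolding sets_density by (rule sets_PiM_cong) auto
  next
    fix A assume A: "\<And>i. i \<in> (Basis::(real^'n) set) \<Longrightarrow> A i \<in> sets stdN"
    have "emeasure (density (Pi\<^sub>M Basis (\<lambda>_. lborel)) (\<lambda>f. \<Prod>b\<in>(Basis::(real^'n) set). ennreal (std_normal_density (f b)))) (Pi\<^sub>E Basis A)
       = (\<integral>\<^sup>+ f. (\<Prod>b\<in>Basis. ennreal (std_normal_density (f b))) * indicator (Pi\<^sub>E Basis A) f \<partial>(Pi\<^sub>M Basis (\<lambda>_. lborel)))"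
      using A by (subst emeasure_density) (auto intro!: sets_PiM_I_finite)
    also have "\<dots> = (\<integral>\<^sup>+ f. (\<Prod>b\<in>Basis. ennreal (std_normal_density (f b)) * indicator (A b) (f b)) \<partial>(Pi\<^sub>M Basis (\<lambda>_. lborel)))"
    proof (intro nn_integral_cong)
      fix f :: "real^'n \<Rightarrow> real" assume "f \<in> space (Pi\<^sub>M (Basis::(real^'n) set) (\<lambda>_. lborel))"
      then have ext: "f \<in> extensional Basis" by (simp add: space_PiM PiE_def)
      have ind: "indicator (Pi\<^sub>E Basis A) f = (\<Prod>b\<in>(Basis::(real^'n) set). indicator (A b) (f b) :: ennreal)"
      proof (cases "f \<in> Pi\<^sub>E Basis A")
        case True then show ?thesis by (simp add: PiE_iff indicator_def)
      next
        case False
        with ext obtain b where "b \<in> Basis" "f b \<notin> A b" by (auto simp: PiE_iff)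
        then show ?thesis using False by (auto simp: indicator_def intro!: prod_zero)
      qed
      show "(\<Prod>b\<in>Basis. ennreal (std_normal_density (f b))) * indicator (Pi\<^sub>E Basis A) f =
         (\<Prod>b\<in>Basis. ennreal (std_normal_density (f b)) * indicator (A b) (f b))"
        unfolding ind by (simp add: prod.distrib)
    qed
    also have "\<dots> = (\<Prod>b\<in>Basis. (\<integral>\<^sup>+ x. ennreal (std_normal_density x) * indicator (A b) x \<partial>lborel))"
      using A by (subst L.product_nn_integral_prod) auto
    also have "\<dots> = (\<Prod>b\<in>Basis. emeasure stdN (A b))"
      using A by (intro prod.cong refl) (simp add: emeasure_density)
    finally show "emeasure (density (Pi\<^sub>M Basis (\<lambda>_. lborel)) (\<lambda>f. \<Prod>b\<in>(Basis::(real^'n) set). ennreal (std_normal_density (f b)))) (Pi\<^sub>E Basis A)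
       = (\<Prod>b\<in>Basis. emeasure stdN (A b))" .
  qed simp
qed

lemma std_gaussian_eq:
  "(std_gaussian :: (real^'n) measure) = distr (PiM (Basis::(real^'n) set) (\<lambda>_. stdN)) borel (\<lambda>f. \<Sum>b\<in>Basis. f b *\<^sub>R b)"
proof -
  let ?T = "\<lambda>f. \<Sum>b\<in>(Basis::(real^'n) set). f b *\<^sub>R b"
  let ?g = "\<lambda>z::real^'n. ennreal (\<Prod>i\<in>UNIV. std_normal_density (z $ i))"
  have T: "?T \<in> measurable (PiM (Basis::(real^'n) set) (\<lambda>_. lborel)) borel"
    by measurable
  have "(std_gaussian :: (real^'n) measure) = density (distr (PiM (Basis::(real^'n) set) (\<lambda>_. lborel)) borel ?T) ?g"
    unfolding std_gaussian_def by (subst lborel_eq) simp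
  also have "\<dots> = distr (density (PiM (Basis::(real^'n) set) (\<lambda>_. lborel)) (\<lambda>f. ?g (?T f))) borel ?T"
    by (rule density_distr) (auto intro: T)
  also have "density (PiM (Basis::(real^'n) set) (\<lambda>_. lborel)) (\<lambda>f. ?g (?T f)) =
     density (PiM (Basis::(real^'n) set) (\<lambda>_. lborel)) (\<lambda>f. \<Prod>b\<in>Basis. ennreal (std_normal_density (f b)))"
  proof (intro density_cong)
    have "(\<Prod>i\<in>UNIV. std_normal_density ((?T f) $ i)) = (\<Prod>b\<in>Basis. std_normal_density (f b))" for f
      by (simp only: basis_sum_nth prod_basis[of std_normal_density])
    then show "AE x in PiM (Basis::(real^'n) set) (\<lambda>_. lborel). ?g (?T x) = (\<Prod>b\<in>Basis. ennreal (std_normal_density (x b)))"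
      by (simp add: prod_ennreal)
  qed auto
  also have "\<dots> = PiM (Basis::(real^'n) set) (\<lambda>_. stdN)" by (rule PiM_stdN)
  finally show ?thesis .
qed


abbreviation "PN \<equiv> PiM (Basis::(real^'n) set) (\<lambda>_. stdN)"

lemma prob_space_PN: "prob_space (PN :: ((real^'n) \<Rightarrow> real) measure)"
  by (intro prob_space_PiM prob_space_normal_density) simp

lemma PN_component:
  assumes "b \<in> (Basis::(real^'n) set)"
  shows "distr (PN :: ((real^'n) \<Rightarrow> real) measure) lborel (\<lambda>f. f b) = stdN"
proof -
  have "distr (PN :: ((real^'n) \<Rightarrow> real) measure) lborel (\<lambda>f. f b) = distr (PN :: ((real^'n) \<Rightarrow> real) measure) stdN (\<lambda>f. f b)"
    by (rule distr_cong) auto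
  also have "\<dots> = stdN"
    using assms by (intro distr_PiM_component prob_space_normal_density) simp_all
  finally show ?thesis .
qed

lemma PN_indep:
  "prob_space.indep_vars (PN :: ((real^'n) \<Rightarrow> real) measure) (\<lambda>_. borel) (\<lambda>b f. f b) (Basis::(real^'n) set)"
proof -
  interpret P: prob_space "PN :: ((real^'n) \<Rightarrow> real) measure" by (rule prob_space_PN)
  have "distr (PN :: ((real^'n) \<Rightarrow> real) measure) (PiM (Basis::(real^'n) set) (\<lambda>_. borel)) (\<lambda>x. \<lambda>b\<in>Basis. x b)
      = distr (PN :: ((real^'n) \<Rightarrow> real) measure) (PiM (Basis::(real^'n) set) (\<lambda>_. borel)) (\<lambda>x. x)"
    by (rule distr_cong) (auto simp: space_PiM PiE_def extensional_restrict)
  also have "\<dots> = (PN :: ((real^'n) \<Rightarrow> real) measure)"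
    by (rule distr_id2) (rule sets_PiM_cong, auto)
  also have "\<dots> = PiM (Basis::(real^'n) set) (\<lambda>b. distr (PN :: ((real^'n) \<Rightarrow> real) measure) borel (\<lambda>f. f b))"
  proof (rule PiM_cong)
    fix b :: "real^'n" assume "b \<in> Basis"
    then show "stdN = distr (PN :: ((real^'n) \<Rightarrow> real) measure) borel (\<lambda>f. f b)"
      using PN_component[of b] by (metis distr_cong sets_lborel)
  qed simp
  finally show ?thesis
    by (subst P.indep_vars_iff_distr_eq_PiM') auto
qed


lemma lin_normal_PN:
  fixes a :: "real^'n"
  assumes a: "a \<noteq> 0"
  shows "distributed (PN :: ((real^'n) \<Rightarrow> real) measure) lborel (\<lambda>f. \<Sum>b\<in>Basis. (a \<bullet> b) * f b) (normal_density 0 (norm a))"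
proof -
  interpret P: prob_space "PN :: ((real^'n) \<Rightarrow> real) measure" by (rule prob_space_PN)
  define I where "I = {b\<in>(Basis::(real^'n) set). a \<bullet> b \<noteq> 0}"
  have I: "finite I" "I \<subseteq> Basis" unfolding I_def by auto
  have Ine: "I \<noteq> {}"
  proof
    assume "I = {}"
    then have "\<forall>b\<in>Basis. a \<bullet> b = 0" unfolding I_def by auto
    then have "a = 0" by (simp add: euclidean_all_zero_iff)
    with a show False by simp
  qed
  have comp: "distributed (PN :: ((real^'n) \<Rightarrow> real) measure) lborel (\<lambda>f. f b) std_normal_density" if "b \<in> Basis" for b
  proof -
    have "(\<lambda>f. f b) \<in> measurable (PN :: ((real^'n) \<Rightarrow> real) measure) stdN"
      by (rule measurable_component_singleton[OF that])
    also have "measurable (PN :: ((real^'n) \<Rightarrow> real) measure) stdN = measurable (PN :: ((real^'n) \<Rightarrow> real) measure) borel"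
      by (rule measurable_cong_sets) auto
    finally show ?thesis
      unfolding distributed_def using PN_component[OF that] by auto
  qed
  have ind: "P.indep_vars (\<lambda>_. borel) (\<lambda>b f. (a \<bullet> b) * f b) I"
    using P.indep_vars_compose2[OF P.indep_vars_subset[OF PN_indep I(2)], of "\<lambda>b x. (a \<bullet> b) * x" "\<lambda>_. borel"]
    by auto
  have dist: "distributed (PN :: ((real^'n) \<Rightarrow> real) measure) lborel (\<lambda>f. (a \<bullet> b) * f b) (normal_density 0 \<bar>a \<bullet> b\<bar>)"
    if "b \<in> I" for b
  proof -
    have "b \<in> Basis" "a \<bullet> b \<noteq> 0" using that I_def by auto
    from P.normal_density_affine[OF comp[OF this(1)] _ this(2), of 0]
    show ?thesis by simp
  qed
  have "distributed (PN :: ((real^'n) \<Rightarrow> real) measure) lborel (\<lambda>f. \<Sum>b\<in>I. (a \<bullet> b) * f b)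
      (normal_density (\<Sum>b\<in>I. 0) (sqrt (\<Sum>b\<in>I. \<bar>a \<bullet> b\<bar>\<^sup>2)))"
    by (rule P.sum_indep_normal[OF I(1) Ine ind]) (auto simp: I_def dist)
  moreover have "(\<lambda>f. \<Sum>b\<in>I. (a \<bullet> b) * f b) = (\<lambda>f. \<Sum>b\<in>Basis. (a \<bullet> b) * f b)"
    unfolding I_def by (intro ext sum.mono_neutral_left) auto
  moreover have "sqrt (\<Sum>b\<in>I. \<bar>a \<bullet> b\<bar>\<^sup>2) = norm a"
  proof -
    have "(\<Sum>b\<in>I. \<bar>a \<bullet> b\<bar>\<^sup>2) = (\<Sum>b\<in>Basis. (a \<bullet> b) * (a \<bullet> b))"
      unfolding I_def by (intro sum.mono_neutral_cong_left) (auto simp: power2_eq_square)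
    also have "\<dots> = a \<bullet> a" by (rule euclidean_inner[symmetric])
    finally show ?thesis by (simp add: norm_eq_sqrt_inner)
  qed
  ultimately show ?thesis by simp
qed


lemma sets_gv[simp]: "sets (gaussian_vec mu A) = sets borel"
  by (simp add: gaussian_vec_def)

lemma space_gv[simp]: "space (gaussian_vec mu A) = UNIV"
  by (simp add: gaussian_vec_def)

lemma prob_space_gv: "prob_space (gaussian_vec (mu::real^'n) A)"
proof -
  interpret P: prob_space "PN :: ((real^'n) \<Rightarrow> real) measure" by (rule prob_space_PN)
  have T: "(\<lambda>f. \<Sum>b\<in>(Basis::(real^'n) set). f b *\<^sub>R b) \<in> measurable (PN :: ((real^'n) \<Rightarrow> real) measure) borel"
    by measurable
  have "prob_space (std_gaussian :: (real^'n) measure)"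
    unfolding std_gaussian_eq by (rule P.prob_space_distr[OF T])
  moreover have "(\<lambda>z. mu + A *v z) \<in> measurable (std_gaussian :: (real^'n) measure) borel"
  proof -
    have G: "(\<lambda>z. mu + A *v z) \<in> measurable borel borel"
      by (intro borel_measurable_continuous_onI continuous_intros)
    also have "measurable borel borel = measurable (std_gaussian :: (real^'n) measure) borel"
      by (rule measurable_cong_sets) (auto simp: std_gaussian_def)
    finally show ?thesis .
  qed
  ultimately show ?thesis unfolding gaussian_vec_def
    by (rule prob_space.prob_space_distr)
qed

lemma gv_linear:
  fixes c mu :: "real^'n" and A :: "real^'n^'n"
  assumes a: "transpose A *v c \<noteq> 0"
  shows "distributed (gaussian_vec mu A) lborel (\<lambda>x. c \<bullet> x) (normal_density (c \<bullet> mu) (norm (transpose A *v c)))"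
proof -
  interpret P: prob_space "PN :: ((real^'n) \<Rightarrow> real) measure" by (rule prob_space_PN)
  define a where "a = transpose A *v c"
  let ?T = "\<lambda>f. \<Sum>b\<in>(Basis::(real^'n) set). f b *\<^sub>R b"
  have T: "?T \<in> measurable (PN :: ((real^'n) \<Rightarrow> real) measure) borel"
    by measurable
  have G: "(\<lambda>z. mu + A *v z) \<in> measurable borel borel"
    by (intro borel_measurable_continuous_onI continuous_intros) 
  have L: "(\<lambda>x. c \<bullet> x) \<in> measurable (borel :: (real^'n) measure) lborel"
    by simp
  from P.normal_density_affine[OF lin_normal_PN[OF a[folded a_def]], of 1 "c \<bullet> mu"]
  have D: "distributed (PN :: ((real^'n) \<Rightarrow> real) measure) lborel (\<lambda>f. c \<bullet> mu + (\<Sum>b\<in>Basis. (a \<bullet> b) * f b))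
      (normal_density (c \<bullet> mu) (norm a))"
    using a unfolding a_def by simp
  have eq: "c \<bullet> (mu + A *v ?T f) = c \<bullet> mu + (\<Sum>b\<in>Basis. (a \<bullet> b) * f b)" for f
  proof -
    have "c \<bullet> (A *v ?T f) = a \<bullet> ?T f"
      unfolding a_def by (simp add: dot_lmul_matrix[symmetric])
    also have "\<dots> = (\<Sum>b\<in>Basis. (a \<bullet> b) * f b)"
      by (simp add: inner_sum_right mult.commute)
    finally show ?thesis by (simp add: inner_add_right)
  qed
  have "distr (gaussian_vec mu A) lborel (\<lambda>x. c \<bullet> x) =
      distr (PN :: ((real^'n) \<Rightarrow> real) measure) lborel (\<lambda>f. c \<bullet> (mu + A *v ?T f))"
  proof -
    have "distr (gaussian_vec mu A) lborel (\<lambda>x. c \<bullet> x) = distr (distr (distr (PN :: ((real^'n) \<Rightarrow> real) measure) borel ?T) borel (\<lambda>z. mu + A *v z)) lborel (\<lambda>x. c \<bullet> x)"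
      unfolding gaussian_vec_def std_gaussian_eq ..
    also have "\<dots> = distr (distr (PN :: ((real^'n) \<Rightarrow> real) measure) borel ?T) lborel ((\<lambda>x. c \<bullet> x) \<circ> (\<lambda>z. mu + A *v z))"
      by (rule distr_distr[OF L]) (simp add: G)
    also have "\<dots> = distr (PN :: ((real^'n) \<Rightarrow> real) measure) lborel (((\<lambda>x. c \<bullet> x) \<circ> (\<lambda>z. mu + A *v z)) \<circ> ?T)"
      by (rule distr_distr[OF _ T]) (use L G in auto)
    finally show ?thesis by (simp add: comp_def)
  qed
  also have "\<dots> = distr (PN :: ((real^'n) \<Rightarrow> real) measure) lborel (\<lambda>f. c \<bullet> mu + (\<Sum>b\<in>Basis. (a \<bullet> b) * f b))"
    by (simp add: eq)
  also have "\<dots> = density lborel (normal_density (c \<bullet> mu) (norm a))"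
    using D by (simp add: distributed_def)
  moreover have "(\<lambda>x. c \<bullet> x) \<in> borel_measurable (gaussian_vec mu A)"
    by (subst measurable_cong_sets[OF sets_gv refl]) simp
  ultimately show ?thesis unfolding distributed_def a_def by simp
qed

lemma nn_normal_1: "s > 0 \<Longrightarrow> (\<integral>\<^sup>+x. ennreal (normal_density m s x) \<partial>lborel) = 1"
  by (subst nn_integral_eq_integral) (auto intro: integrable_normal_density)

lemma normal_tail:
  assumes M: "prob_space M" and D: "distributed M lborel X (normal_density m s)"
    and s: "s > 0" and t: "t \<ge> 0"
  shows "measure M {x\<in>space M. X x > m + t} \<le> exp (- t\<^sup>2 / (2 * s\<^sup>2))"
proof -
  interpret prob_space M by (rule M)
  have pw: "normal_density m s x * indicator {m+t<..} x \<le> exp (- t\<^sup>2 / (2 * s\<^sup>2)) * normal_density (m+t) s x" for x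
  proof (cases "x > m + t")
    case True
    have "- (x - m)\<^sup>2 / (2 * s\<^sup>2) \<le> - t\<^sup>2 / (2 * s\<^sup>2) + - (x - (m + t))\<^sup>2 / (2 * s\<^sup>2)"
    proof -
      have "t\<^sup>2 + (x - (m + t))\<^sup>2 \<le> (x - m)\<^sup>2"
      proof -
        have "0 \<le> t * (x - (m + t))" using True t by simp
        moreover have "(x - m)\<^sup>2 = t\<^sup>2 + (x - (m + t))\<^sup>2 + 2 * (t * (x - (m + t)))"
          by (simp add: power2_eq_square algebra_simps)
        ultimately show ?thesis by linarith
      qed
      then show ?thesis using s by (simp add: divide_simps)
    qed
    then have "exp (- (x - m)\<^sup>2 / (2 * s\<^sup>2)) \<le> exp (- t\<^sup>2 / (2 * s\<^sup>2)) * exp (- (x - (m + t))\<^sup>2 / (2 * s\<^sup>2))"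
      by (simp add: exp_add[symmetric])
    then have "exp (- (x - m)\<^sup>2 / (2 * s\<^sup>2)) / sqrt (2 * pi * s\<^sup>2) \<le> exp (- t\<^sup>2 / (2 * s\<^sup>2)) * exp (- (x - (m + t))\<^sup>2 / (2 * s\<^sup>2)) / sqrt (2 * pi * s\<^sup>2)"
      by (intro divide_right_mono) auto
    then show ?thesis using True unfolding normal_density_def
      by (simp add: algebra_simps)
  qed (auto simp: indicator_def)
  have "emeasure M (X -` {m+t<..} \<inter> space M) = (\<integral>\<^sup>+x. ennreal (normal_density m s x) * indicator {m+t<..} x \<partial>lborel)"
    by (rule distributed_emeasure[OF D]) simp
  also have "\<dots> \<le> (\<integral>\<^sup>+x. ennreal (exp (- t\<^sup>2 / (2 * s\<^sup>2))) * ennreal (normal_density (m+t) s x) \<partial>lborel)"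
  proof (intro nn_integral_mono)
    fix x
    have "ennreal (normal_density m s x) * indicator {m+t<..} x = ennreal (normal_density m s x * indicator {m+t<..} x)"
      by (simp add: indicator_def)
    also have "\<dots> \<le> ennreal (exp (- t\<^sup>2 / (2 * s\<^sup>2)) * normal_density (m+t) s x)"
      by (rule ennreal_leI[OF pw])
    also have "\<dots> = ennreal (exp (- t\<^sup>2 / (2 * s\<^sup>2))) * ennreal (normal_density (m+t) s x)"
      by (simp add: ennreal_mult')
    finally show "ennreal (normal_density m s x) * indicator {m+t<..} x \<le> ennreal (exp (- t\<^sup>2 / (2 * s\<^sup>2))) * ennreal (normal_density (m+t) s x)" .
  qed
  also have "\<dots> = ennreal (exp (- t\<^sup>2 / (2 * s\<^sup>2)))"
    using s by (simp add: nn_integral_cmult nn_normal_1)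
  finally have "ennreal (measure M (X -` {m+t<..} \<inter> space M)) \<le> ennreal (exp (- t\<^sup>2 / (2 * s\<^sup>2)))"
    by (simp add: emeasure_eq_measure)
  moreover have "X -` {m+t<..} \<inter> space M = {x\<in>space M. X x > m + t}" by auto
  ultimately show ?thesis by (simp add: ennreal_le_iff)
qed

lemma normal_interval:
  assumes M: "prob_space M" and D: "distributed M lborel X (normal_density m s)"
    and s: "s > 0" and ab: "\<alpha> \<le> \<beta>"
  shows "measure M {x\<in>space M. \<alpha> < X x \<and> X x \<le> \<beta>} \<le> (\<beta> - \<alpha>) / (s * sqrt (2 * pi))"
proof -
  interpret prob_space M by (rule M)
  have sq: "sqrt (2 * pi * s\<^sup>2) = s * sqrt (2 * pi)"
    using s by (simp add: real_sqrt_mult)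
  have pw: "normal_density m s x \<le> 1 / (s * sqrt (2 * pi))" for x
    unfolding normal_density_def sq using s by (simp add: divide_simps)
  have "emeasure M (X -` {\<alpha><..\<beta>} \<inter> space M) = (\<integral>\<^sup>+x. ennreal (normal_density m s x) * indicator {\<alpha><..\<beta>} x \<partial>lborel)"
    by (rule distributed_emeasure[OF D]) simp
  also have "\<dots> \<le> (\<integral>\<^sup>+x. ennreal (1 / (s * sqrt (2 * pi))) * indicator {\<alpha><..\<beta>} x \<partial>lborel)"
    by (intro nn_integral_mono) (use pw in \<open>auto simp: indicator_def intro: ennreal_leI\<close>)
  also have "\<dots> = ennreal (1 / (s * sqrt (2 * pi))) * ennreal (\<beta> - \<alpha>)"
    using ab by (simp add: nn_integral_cmult_indicator)
  also have "\<dots> = ennreal ((\<beta> - \<alpha>) / (s * sqrt (2 * pi)))"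
    using ab s by (simp add: ennreal_mult'[symmetric])
  finally have "ennreal (measure M (X -` {\<alpha><..\<beta>} \<inter> space M)) \<le> ennreal ((\<beta> - \<alpha>) / (s * sqrt (2 * pi)))"
    by (simp add: emeasure_eq_measure)
  moreover have "X -` {\<alpha><..\<beta>} \<inter> space M = {x\<in>space M. \<alpha> < X x \<and> X x \<le> \<beta>}" by auto
  ultimately show ?thesis using ab s by (simp add: ennreal_le_iff)
qed


lemma diff_axis_inner: "(axis p 1 - axis q 1) \<bullet> (x::real^'n) = x $ p - x $ q"
  by (simp add: inner_diff_left inner_axis')

lemma transpose_diff_axis: "transpose (A::real^'n^'n) *v (axis p 1 - axis q 1) = A $ p - A $ q"
  by (simp add: vec_eq_iff matrix_vector_mult_def transpose_def axis_def right_diff_distrib sum_subtractf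
        if_distrib[of "\<lambda>y. _ * y"] cong: if_cong)

lemma gv_diff:
  fixes mu :: "real^'n" and A :: "real^'n^'n"
  assumes "A $ p \<noteq> A $ q"
  shows "distributed (gaussian_vec mu A) lborel (\<lambda>x. x $ p - x $ q)
           (normal_density (mu $ p - mu $ q) (norm (A $ p - A $ q)))"
  using gv_linear[of A "axis p 1 - axis q 1" mu] assms
  unfolding transpose_diff_axis diff_axis_inner by simp

lemma gv_measurable: "(\<lambda>z. mu + (A::real^'n^'n) *v z) \<in> measurable (std_gaussian :: (real^'n) measure) borel"
proof -
  have G: "(\<lambda>z. mu + A *v z) \<in> measurable borel borel"
    by (intro borel_measurable_continuous_onI continuous_intros)
  also have "measurable borel borel = measurable (std_gaussian :: (real^'n) measure) borel"
    by (rule measurable_cong_sets) (auto simp: std_gaussian_def)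
  finally show ?thesis .
qed

lemma gv_empty:
  fixes mu :: "real^'n" and A :: "real^'n^'n"
  assumes S: "S \<in> sets borel" and E: "\<And>z. mu + A *v z \<notin> S"
  shows "measure (gaussian_vec mu A) S = 0"
proof -
  have "measure (gaussian_vec mu A) S = measure std_gaussian ((\<lambda>z. mu + A *v z) -` S \<inter> space std_gaussian)"
    unfolding gaussian_vec_def by (rule measure_distr[OF gv_measurable S])
  also have "(\<lambda>z. mu + A *v z) -` S \<inter> space std_gaussian = {}" using E by auto
  finally show ?thesis by simp
qed


lemma ln4: "1 \<le> ln (4::real)"
proof -
  have "exp 1 \<le> (4::real)" using exp_le by simp
  then show ?thesis by (simp add: ln_ge_iff)
qed

lemma final_arith:
  fixes \<gamma> \<sigma> ni :: real
  assumes g: "0 < \<gamma>" "\<gamma> < 1" and s: "0 \<le> \<sigma>" and ni: "0 \<le> ni" "ni \<le> \<sigma> + 2"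
    and key: "\<gamma>\<^sup>2 * \<sigma>\<^sup>2 * 3 \<le> 256 * ln (2 / \<gamma>)"
  shows "ni\<^sup>2 \<le> 100 * ln (8 / \<gamma>) / \<gamma>\<^sup>2"
proof -
  have l0: "0 \<le> ln (2 / \<gamma>)" using g by simp
  have l8: "ln (8 / \<gamma>) = ln 4 + ln (2 / \<gamma>)"
  proof -
    have "ln (8 / \<gamma>) = ln (4 * (2 / \<gamma>))" by simp
    also have "\<dots> = ln 4 + ln (2 / \<gamma>)" using g by (subst ln_mult) auto
    finally show ?thesis .
  qed
  have g2: "\<gamma>\<^sup>2 \<le> 1" using g by (simp add: power_le_one)
  have "ni\<^sup>2 \<le> (\<sigma> + 2)\<^sup>2" using ni by (simp add: power_mono)
  also have "\<dots> \<le> 11/10 * \<sigma>\<^sup>2 + 44"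
  proof -
    have "0 \<le> (\<sigma>/ sqrt 10 - 2 * sqrt 10)\<^sup>2" by simp
    then show ?thesis by (simp add: power2_eq_square algebra_simps)
  qed
  finally have "\<gamma>\<^sup>2 * ni\<^sup>2 \<le> \<gamma>\<^sup>2 * (11/10 * \<sigma>\<^sup>2 + 44)"
    by (simp add: mult_left_mono)
  also have "\<dots> = 11/10 * (\<gamma>\<^sup>2 * \<sigma>\<^sup>2) + 44 * \<gamma>\<^sup>2" by (simp add: algebra_simps)
  also have "\<dots> \<le> 100 * ln (8 / \<gamma>)"
  proof -
    define X where "X = \<gamma>\<^sup>2 * \<sigma>\<^sup>2"
    define Y where "Y = \<gamma>\<^sup>2"
    define l where "l = ln (2 / \<gamma>)"
    have "X * 3 \<le> 256 * l" "Y \<le> 1" "0 \<le> l" using key g2 l0 unfolding X_def Y_def l_def by auto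
    then have "11/10 * X + 44 * Y \<le> 100 * (c + l)" if "1 \<le> c" for c using that by (simp add: field_simps)
    from this[OF ln4] have "11/10 * X + 44 * Y \<le> 100 * (ln 4 + l)" .
    then show ?thesis unfolding X_def Y_def l_def l8 .
  qed
  finally show ?thesis using g by (simp add: field_simps)
qed


lemma diag_norm:
  fixes A Sigma :: "real^'n^'n"
  assumes "A ** transpose A = Sigma"
  shows "Sigma $ l $ l = (norm (A $ l))\<^sup>2"
  unfolding assms[symmetric] power2_norm_eq_inner
  by (simp add: matrix_matrix_mult_def transpose_def inner_vec_def)

lemma good_pair:
  fixes A :: "real^'n^'n"
  assumes n3: "CARD('n) \<ge> 3" and S: "(\<Sum>l\<in>UNIV. (norm (A $ l))\<^sup>2) = real CARD('n)"
  shows "\<exists>j k. j \<noteq> i \<and> k \<noteq> i \<and> j \<noteq> k \<and> norm (A $ j) \<le> 2 \<and> norm (A $ k) \<le> 2"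
proof -
  define Good where "Good = {l. (norm (A $ l))\<^sup>2 \<le> 3}"
  define Bad where "Bad = {l. \<not> (norm (A $ l))\<^sup>2 \<le> 3}"
  have GB: "card Good + card Bad = CARD('n)"
    unfolding Good_def Bad_def by (subst card_Un_disjoint[symmetric]) (auto intro!: arg_cong[where f=card])
  have "card Good \<ge> 3"
  proof (cases "Bad = {}")
    case True then show ?thesis using GB n3 by simp
  next
    case False
    have "3 * real (card Bad) = (\<Sum>l\<in>Bad. 3)" by simp
    also have "\<dots> < (\<Sum>l\<in>Bad. (norm (A $ l))\<^sup>2)"
      using False by (intro sum_strict_mono) (auto simp: Bad_def)
    also have "\<dots> \<le> (\<Sum>l\<in>UNIV. (norm (A $ l))\<^sup>2)"
      by (intro sum_mono2) auto
    finally have "3 * real (card Bad) < real CARD('n)" using S by simp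
    then show ?thesis using GB n3 by linarith
  qed
  then have "card (Good - {i}) \<ge> 2"
    by (metis card_Diff_singleton_if finite diff_le_mono numeral_3_eq_3 numeral_2_eq_2 diff_Suc_1 le_trans diff_le_self)
  then obtain j where j: "j \<in> Good - {i}"
    by (metis card.empty ex_in_conv not_numeral_le_zero)
  have "card (Good - {i} - {j}) \<ge> 1"
    using \<open>card (Good - {i}) \<ge> 2\<close> j by (simp add: card_Diff_singleton)
  then obtain k where k: "k \<in> Good - {i} - {j}"
    by (metis card.empty ex_in_conv not_one_le_zero)
  have n2: "norm (A $ l) \<le> 2" if "l \<in> Good" for l
  proof -
    have "(norm (A $ l))\<^sup>2 \<le> 2\<^sup>2" using that by (simp add: Good_def)
    then show ?thesis by (rule power2_le_imp_le) simp
  qed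
  show ?thesis using j k n2 by blast
qed


lemma sets_lt3: "{x::real^'n. x $ a > x $ b \<and> x $ b > x $ c} \<in> sets borel"
  by (intro borel_open open_Collect_conj open_Collect_less continuous_intros)

lemma sets_diff_gt: "{x::real^'n. x $ p - x $ q > L} \<in> sets borel"
  by (intro borel_open open_Collect_less continuous_intros)

lemma sets_diff_int: "{x::real^'n. 0 < x $ p - x $ q \<and> x $ p - x $ q \<le> L} \<in> sets borel"
proof -
  have "{x::real^'n. 0 < x $ p - x $ q \<and> x $ p - x $ q \<le> L} = {x. 0 < x $ p - x $ q} \<inter> {x. x $ p - x $ q \<le> L}"
    by auto
  moreover have "{x::real^'n. 0 < x $ p - x $ q} \<in> sets borel"
    by (intro borel_open open_Collect_less continuous_intros)
  moreover have "{x::real^'n. x $ p - x $ q \<le> L} \<in> sets borel"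
    by (intro borel_closed closed_Collect_le continuous_intros)
  ultimately show ?thesis by simp
qed

lemma core:
  fixes mu :: "real^'n" and A :: "real^'n^'n" and \<gamma> :: real
  assumes ij: "i \<noteq> j" "i \<noteq> k" "j \<noteq> k" and nj: "norm (A $ j) \<le> 2" and nk: "norm (A $ k) \<le> 2"
    and \<gamma>: "0 < \<gamma>" "\<gamma> < 1"
    and obs: "\<forall>i j k. i \<noteq> j \<and> j \<noteq> k \<and> i \<noteq> k \<longrightarrow>
               measure (gaussian_vec mu A) {x. x $ i > x $ j \<and> x $ j > x $ k} \<ge> \<gamma>"
  shows "(norm (A $ i))\<^sup>2 \<le> 100 * ln (8 / \<gamma>) / \<gamma>\<^sup>2"
proof -
  interpret G: prob_space "gaussian_vec mu A" by (rule prob_space_gv)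
  let ?G = "gaussian_vec mu A"
  have ni: "norm (A $ i) \<le> norm (A $ i - A $ k) + 2"
    using norm_triangle_sub[of "A $ i" "A $ k"] nk by linarith
  show ?thesis
  proof (cases "A $ j = A $ k")
    case True
    define m where "m = mu $ j - mu $ k"
    have eqjk: "(mu + A *v z) $ j - (mu + A *v z) $ k = m" for z
      unfolding m_def by (simp add: matrix_vector_mult_def True)
    show ?thesis
    proof (cases "m \<le> 0")
      case True
      have "measure ?G {x. x $ j > x $ k \<and> x $ k > x $ i} = 0"
      proof (rule gv_empty[OF sets_lt3])
        fix z
        have "\<not> ((mu + A *v z) $ k < (mu + A *v z) $ j)" using eqjk[of z] True by linarith
        then show "mu + A *v z \<notin> {x. x $ j > x $ k \<and> x $ k > x $ i}" by auto
      qed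
      moreover have "measure ?G {x. x $ j > x $ k \<and> x $ k > x $ i} \<ge> \<gamma>"
        using obs ij by auto
      ultimately show ?thesis using \<gamma> by linarith
    next
      case False
      have "measure ?G {x. x $ k > x $ j \<and> x $ j > x $ i} = 0"
      proof (rule gv_empty[OF sets_lt3])
        fix z
        have "\<not> ((mu + A *v z) $ j < (mu + A *v z) $ k)" using eqjk[of z] False by linarith
        then show "mu + A *v z \<notin> {x. x $ k > x $ j \<and> x $ j > x $ i}" by auto
      qed
      moreover have "measure ?G {x. x $ k > x $ j \<and> x $ j > x $ i} \<ge> \<gamma>"
        using obs ij by auto
      ultimately show ?thesis using \<gamma> by linarith
    qed
  next
    case jk: False
    show ?thesis
    proof (cases "A $ i = A $ k")
      case True
      then have "norm (A $ i) \<le> 2" using nk by simp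
      then have "(norm (A $ i))\<^sup>2 \<le> 2\<^sup>2" by (intro power_mono) auto
      also have "\<dots> \<le> 100 * ln (8 / \<gamma>) / \<gamma>\<^sup>2"
      proof -
        have "1 \<le> ln (8 / \<gamma>)"
        proof -
          have "ln 4 \<le> ln (8 / \<gamma>)" using \<gamma> by (simp add: field_simps)
          then show ?thesis using ln4 by linarith
        qed
        moreover have "\<gamma>\<^sup>2 \<le> 1" using \<gamma> by (simp add: power_le_one)
        ultimately have "4 * \<gamma>\<^sup>2 \<le> 100 * ln (8 / \<gamma>)" by linarith
        then show ?thesis using \<gamma> by (simp add: field_simps)
      qed
      finally show ?thesis .
    next
      case ik: False
      define \<sigma> where "\<sigma> = norm (A $ i - A $ k)"
      define \<tau> where "\<tau> = norm (A $ j - A $ k)"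
      define m where "m = mu $ j - mu $ k"
      have \<sigma>: "\<sigma> > 0" using ik unfolding \<sigma>_def by simp
      have \<tau>: "\<tau> > 0" using jk unfolding \<tau>_def by simp
      have \<tau>4: "\<tau> \<le> 4"
        using norm_triangle_ineq4[of "A $ j" "A $ k"] nj nk unfolding \<tau>_def by linarith
      have DW: "distributed ?G lborel (\<lambda>x. x $ j - x $ k) (normal_density m \<tau>)"
        using gv_diff[OF jk, of mu] unfolding m_def \<tau>_def .
      have DW': "distributed ?G lborel (\<lambda>x. x $ k - x $ j) (normal_density (-m) \<tau>)"
        using gv_diff[of A k j mu] jk unfolding m_def \<tau>_def by (simp add: norm_minus_commute)
      have DV: "distributed ?G lborel (\<lambda>x. x $ i - x $ k) (normal_density (mu $ i - mu $ k) \<sigma>)"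
        using gv_diff[OF ik, of mu] unfolding \<sigma>_def .
      define a0 where "a0 = sqrt (2 * ln (1 / \<gamma>))"
      define b0 where "b0 = sqrt (2 * ln (2 / \<gamma>))"
      have l1: "0 \<le> ln (1 / \<gamma>)" using \<gamma> by (intro ln_ge_zero) simp
      have l2: "ln (1 / \<gamma>) \<le> ln (2 / \<gamma>)" using \<gamma> by (simp add: divide_right_mono)
      have a0b0: "a0 \<le> b0" unfolding a0_def b0_def using l1 l2 by simp
      have a0: "0 \<le> a0" unfolding a0_def using l1 by simp
      have b0sq: "b0\<^sup>2 = 2 * ln (2 / \<gamma>)" unfolding b0_def using l1 l2 by simp
      have mb: "m \<le> \<tau> * a0"
      proof (cases "m \<le> 0")
        case True then show ?thesis using a0 \<tau> mult_nonneg_nonneg[of \<tau> a0] by linarith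
      next
        case False
        have "\<gamma> \<le> measure ?G {x. x $ k > x $ j \<and> x $ j > x $ i}"
          using obs ij by auto
        also have "\<dots> \<le> measure ?G {x. x $ k - x $ j > 0}"
          by (intro G.finite_measure_mono) (auto simp: sets_diff_gt)
        also have "\<dots> = measure ?G {x\<in>space ?G. x $ k - x $ j > -m + m}"
          by simp
        also have "\<dots> \<le> exp (- m\<^sup>2 / (2 * \<tau>\<^sup>2))"
          by (rule normal_tail[OF G.prob_space_axioms DW' \<tau>]) (use False in simp)
        finally have g1: "\<gamma> \<le> exp (- m\<^sup>2 / (2 * \<tau>\<^sup>2))" .
        have "ln \<gamma> \<le> ln (exp (- m\<^sup>2 / (2 * \<tau>\<^sup>2)))"
          using g1 \<gamma> by (subst ln_le_cancel_iff) auto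
        then have "ln \<gamma> \<le> - m\<^sup>2 / (2 * \<tau>\<^sup>2)" by (simp only: ln_exp)
        then have "m\<^sup>2 / (2 * \<tau>\<^sup>2) \<le> - ln \<gamma>" by linarith
        then have "m\<^sup>2 \<le> (- ln \<gamma>) * (2 * \<tau>\<^sup>2)"
          using \<tau> by (subst (asm) pos_divide_le_eq) auto
        moreover have "ln (1 / \<gamma>) = - ln \<gamma>"
          using \<gamma> by (simp add: ln_div)
        ultimately have "m\<^sup>2 \<le> \<tau>\<^sup>2 * (2 * ln (1 / \<gamma>))" by (simp add: algebra_simps)
        then have "m \<le> sqrt (\<tau>\<^sup>2 * (2 * ln (1 / \<gamma>)))" by (rule real_le_rsqrt)
        also have "\<dots> = \<tau> * a0"
          unfolding a0_def using \<tau> by (simp add: real_sqrt_mult)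
        finally show ?thesis .
      qed
      define L where "L = m + \<tau> * b0"
      define SW where "SW = {x::real^'n. x $ j - x $ k > L}"
      define SV where "SV = {x::real^'n. 0 < x $ i - x $ k \<and> x $ i - x $ k \<le> L}"
      have mSW: "SW \<in> sets ?G" unfolding SW_def by (simp add: sets_diff_gt)
      have mSV: "SV \<in> sets ?G" unfolding SV_def by (simp add: sets_diff_int)
      have b0nn: "0 \<le> \<tau> * b0" using \<tau> l1 l2 unfolding b0_def by simp
      have tailW: "measure ?G SW \<le> \<gamma> / 2"
      proof -
        have "measure ?G SW = measure ?G {x\<in>space ?G. x $ j - x $ k > m + \<tau> * b0}"
          unfolding SW_def L_def by simp
        also have "\<dots> \<le> exp (- (\<tau> * b0)\<^sup>2 / (2 * \<tau>\<^sup>2))"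
          by (rule normal_tail[OF G.prob_space_axioms DW \<tau> b0nn])
        also have "- (\<tau> * b0)\<^sup>2 / (2 * \<tau>\<^sup>2) = - ln (2 / \<gamma>)"
          using \<tau> by (simp add: power_mult_distrib b0sq)
        also have "exp (- ln (2 / \<gamma>)) = \<gamma> / 2"
          using \<gamma> by (simp add: exp_minus)
        finally show ?thesis .
      qed
      have E: "\<gamma> \<le> measure ?G {x. x $ j > x $ i \<and> x $ i > x $ k}"
        using obs ij by auto
      have L0: "0 \<le> L"
      proof (rule ccontr)
        assume L: "\<not> 0 \<le> L"
        have "{x. x $ j > x $ i \<and> x $ i > x $ k} \<subseteq> SW" unfolding SW_def using L by auto
        then have "measure ?G {x. x $ j > x $ i \<and> x $ i > x $ k} \<le> measure ?G SW"
          using mSW by (intro G.finite_measure_mono) auto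
        then show False using E tailW \<gamma> by linarith
      qed
      have sub: "{x. x $ j > x $ i \<and> x $ i > x $ k} \<subseteq> SW \<union> SV"
        unfolding SW_def SV_def by auto
      have "\<gamma> \<le> measure ?G (SW \<union> SV)"
        using E G.finite_measure_mono[OF sub] mSW mSV by (meson order_trans sets.Un)
      also have "\<dots> \<le> measure ?G SW + measure ?G SV"
        using mSW mSV by (rule measure_Un_le)
      finally have "\<gamma> \<le> measure ?G SW + measure ?G SV" .
      moreover have "measure ?G SV \<le> (L - 0) / (\<sigma> * sqrt (2 * pi))"
        using normal_interval[OF G.prob_space_axioms DV \<sigma> L0] unfolding SV_def by simp
      ultimately have "\<gamma> \<le> \<gamma> / 2 + L / (\<sigma> * sqrt (2 * pi))" using tailW by simp
      then have "\<gamma> / 2 \<le> L / (\<sigma> * sqrt (2 * pi))" by linarith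
      then have "\<gamma> * (\<sigma> * sqrt (2 * pi)) \<le> 2 * L"
        using \<sigma> by (simp add: field_simps)
      also have "\<dots> \<le> 4 * (\<tau> * b0)"
      proof -
        have "\<tau> * a0 \<le> \<tau> * b0" using a0b0 \<tau> by (intro mult_left_mono) auto
        then show ?thesis using mb unfolding L_def by argo
      qed
      finally have k1: "\<gamma> * \<sigma> * sqrt (2 * pi) \<le> 4 * \<tau> * b0" by (simp add: mult.assoc)
      have "(\<gamma> * \<sigma> * sqrt (2 * pi))\<^sup>2 \<le> (4 * \<tau> * b0)\<^sup>2"
        using k1 \<gamma> \<sigma> by (intro power_mono) auto
      then have "\<gamma>\<^sup>2 * \<sigma>\<^sup>2 * (2 * pi) \<le> 16 * \<tau>\<^sup>2 * (2 * ln (2 / \<gamma>))"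
        by (simp add: power_mult_distrib b0sq)
      then have k2: "\<gamma>\<^sup>2 * \<sigma>\<^sup>2 * pi \<le> 16 * \<tau>\<^sup>2 * ln (2 / \<gamma>)" by (simp add: ac_simps)
      have "\<tau>\<^sup>2 \<le> 4\<^sup>2" using \<tau> \<tau>4 by (intro power_mono) auto
      then have "16 * \<tau>\<^sup>2 * ln (2 / \<gamma>) \<le> 256 * ln (2 / \<gamma>)"
        using l1 l2 by (simp add: mult_right_mono)
      moreover have "\<gamma>\<^sup>2 * \<sigma>\<^sup>2 * 3 \<le> \<gamma>\<^sup>2 * \<sigma>\<^sup>2 * pi"
        using pi_gt3 by (intro mult_left_mono) auto
      ultimately have key: "\<gamma>\<^sup>2 * \<sigma>\<^sup>2 * 3 \<le> 256 * ln (2 / \<gamma>)" using k2 by linarith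
      show ?thesis
        by (rule final_arith[OF \<gamma> _ _ _ key]) (use \<sigma> ni \<sigma>_def in auto)
    qed
  qed
qed


theorem lemma10:
  fixes mu :: "real^'n::finite" and Sigma A :: "real^'n^'n" and \<gamma> :: real
  assumes n3: "CARD('n) \<ge> 3"
    and sym: "transpose Sigma = Sigma"
    and psd: "\<forall>v. v \<bullet> (Sigma *v v) \<ge> 0"
    and sqrt: "A ** transpose A = Sigma"
    and mean0: "(\<Sum>i\<in>UNIV. mu $ i) = 0"
    and ker1: "Sigma *v (\<chi> i. 1) = 0"
    and tr: "trace Sigma = real CARD('n)"
    and rk: "rank Sigma = CARD('n) - 1"
    and \<gamma>: "0 < \<gamma>" "\<gamma> < 1"
    and obs: "\<forall>i j k. i \<noteq> j \<and> j \<noteq> k \<and> i \<noteq> k \<longrightarrow>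
               measure (gaussian_vec mu A) {x. x $ i > x $ j \<and> x $ j > x $ k} \<ge> \<gamma>"
  shows "\<forall>i. Sigma $ i $ i \<le> 100 * ln (8 / \<gamma>) / \<gamma>\<^sup>2"
proof
  fix i
  have S: "(\<Sum>l\<in>UNIV. (norm (A $ l))\<^sup>2) = real CARD('n)"
    using tr by (simp add: trace_def diag_norm[OF sqrt])
  obtain j k where jk: "j \<noteq> i" "k \<noteq> i" "j \<noteq> k" "norm (A $ j) \<le> 2" "norm (A $ k) \<le> 2"
    using good_pair[OF n3 S, of i] by blast
  have "(norm (A $ i))\<^sup>2 \<le> 100 * ln (8 / \<gamma>) / \<gamma>\<^sup>2"
    by (rule core[OF _ _ jk(3) jk(4) jk(5) \<gamma> obs]) (use jk in auto)
  then show "Sigma $ i $ i \<le> 100 * ln (8 / \<gamma>) / \<gamma>\<^sup>2"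
    by (simp add: diag_norm[OF sqrt])
qed

end
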